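(* Let $n,r\ge1$ and let $\mathbf i=(i_k)_{k\in\mathbb Z}$ be a sequence of integers with $i_{k+r}=i_k+n$ for all $k$. Let $A^{\mathbf i}=(a_{k,l})_{k,l\in\mathbb Z}$ with $a_{k,l}=\delta_{k,i_l}$. Then $d_{A^{\mathbf i}}=|\mathrm{Inv}(\mathbf i)|$, where $\mathrm{Inv}(\mathbf i)=\{(s,t)\in\mathbb Z^2\mid 1\le s\le r,\ s<t,\ i_s\ge i_t\}$.
   Context: For a matrix $A=(a_{i,j})_{i,j\in\mathbb Z}$ with entries in $\mathbb N$ satisfying $a_{i+n,j+n}=a_{i,j}$ (as is the case for $A^{\mathbf i}$), define $d_A=\sum a_{i,j}a_{k,l}$, the sum running over all $i,j,k,l\in\mathbb Z$ with $1\le i\le n$, $k\le i$ and $j<l$. *)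

theory Defs
  imports "HOL-Analysis.Analysis"
begin

definition dA_index :: "int \<Rightarrow> (int \<times> int \<times> int \<times> int) set" where
  "dA_index n = {(i, j, k, l). 1 \<le> i \<and> i \<le> n \<and> k \<le> i \<and> j < l}"

definition dA :: "int \<Rightarrow> (int \<Rightarrow> int \<Rightarrow> nat) \<Rightarrow> nat" where
  "dA n A = (\<Sum>\<^sub>\<infinity>(i, j, k, l)\<in>dA_index n. A i j * A k l)"

definition matA :: "(int \<Rightarrow> int) \<Rightarrow> int \<Rightarrow> int \<Rightarrow> nat" where
  "matA ii k l = (if k = ii l then 1 else 0)"

definition Inv :: "int \<Rightarrow> (int \<Rightarrow> int) \<Rightarrow> (int \<times> int) set" where
  "Inv r ii = {(s, t). 1 \<le> s \<and> s \<le> r \<and> s < t \<and> ii s \<ge> ii t}"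

end

theory Submission
  imports Defs
begin

lemma shift_nat:
  fixes n r :: int and ii :: "int \<Rightarrow> int"
  assumes "\<And>k. ii (k + r) = ii k + n"
  shows "ii (k + int m * r) = ii k + int m * n"
proof (induction m)
  case 0 then show ?case by simp
next
  case (Suc m)
  have "ii (k + int (Suc m) * r) = ii ((k + int m * r) + r)" by (simp add: algebra_simps)
  also have "\<dots> = ii (k + int m * r) + n" using assms by blast
  also have "\<dots> = ii k + int (Suc m) * n" using Suc by (simp add: algebra_simps)
  finally show ?case .
qed

lemma shift_int:
  fixes n r :: int and ii :: "int \<Rightarrow> int"
  assumes "\<And>k. ii (k + r) = ii k + n"
  shows "ii (k + m * r) = ii k + m * n"
proof (cases "m \<ge> 0")
  case True
  then obtain m' where "m = int m'" by (metis nonneg_eq_int)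
  then show ?thesis using shift_nat[of ii r n, OF assms] by simp
next
  case False
  then have "- m \<ge> 0" by simp
  then obtain m' where "- m = int m'" by (metis nonneg_eq_int)
  then have m': "m = - int m'" by simp
  have "ii k = ii ((k + m * r) + int m' * r)" using m' by (simp add: algebra_simps)
  also have "\<dots> = ii (k + m * r) + int m' * n" using shift_nat[of ii r n, OF assms] by blast
  finally show ?thesis using m' by (simp add: algebra_simps)
qed

theorem lemma3p1p4:
  fixes n r :: int and ii :: "int \<Rightarrow> int"
  assumes "n \<ge> 1" and "r \<ge> 1"
    and "\<And>k. ii (k + r) = ii k + n"
  shows "(\<lambda>(i, j, k, l). matA ii i j * matA ii k l) summable_on dA_index n \<and>
     finite (Inv r ii) \<and>
     dA n (matA ii) = card (Inv r ii)"
proof -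
  note sh = shift_int[of ii r n, OF assms(3)]
  define M where "M = Max (ii ` {1..r})"
  define m0 where "m0 = Min (ii ` {1..r})"
  have Mb: "ii s \<le> M" if "1 \<le> s" "s \<le> r" for s
    unfolding M_def using that by (intro Max_ge) auto
  have mb: "m0 \<le> ii s" if "1 \<le> s" "s \<le> r" for s
    unfolding m0_def using that by (intro Min_le) auto
  define B where "B = r + \<bar>M - m0\<bar> * r"
  have finInv: "finite (Inv r ii)"
  proof (rule finite_subset)
    show "Inv r ii \<subseteq> {1..r} \<times> {1..B}"
    proof
      fix p assume "p \<in> Inv r ii"
      then obtain s t where p: "p = (s,t)" "1 \<le> s" "s \<le> r" "s < t" "ii t \<le> ii s"
        unfolding Inv_def by auto
      define q where "q = (t - 1) div r"
      define t0 where "t0 = (t - 1) mod r + 1"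
      have t: "t = t0 + q * r" unfolding q_def t0_def
        using div_mult_mod_eq[of "t-1" r] by linarith
      have "0 < r" using assms(2) by simp
      then have "(t-1) mod r < r" "0 \<le> (t-1) mod r" by simp_all
      then have t0: "1 \<le> t0" "t0 \<le> r" unfolding t0_def by linarith+
      have "ii t = ii t0 + q * n" using sh t by simp
      hence "q * n \<le> M - m0" using Mb[OF p(2,3)] mb[OF t0] p(5) by linarith
      hence qb: "q \<le> \<bar>M - m0\<bar>"
      proof -
        assume h: "q * n \<le> M - m0"
        show ?thesis
        proof (cases "q \<ge> 0")
          case True
          then have "q \<le> q * n" using assms(1) by (simp add: mult_le_cancel_left1)
          then show ?thesis using h by linarith
        next
          case False then show ?thesis by linarith
        qed
      qed
      have "q * r \<le> \<bar>M - m0\<bar> * r" using qb assms(2) by (simp add: mult_right_mono)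
      then have "t \<le> B" unfolding B_def using t t0 by linarith
      then show "p \<in> {1..r} \<times> {1..B}" using p by auto
    qed
  qed auto
  define P where "P = {(j,l). 1 \<le> ii j \<and> ii j \<le> n \<and> j < l \<and> ii l \<le> ii j}"
  define g where "g = (\<lambda>(j::int,l::int). (j - ((j-1) div r) * r, l - ((j-1) div r) * r))"
  have ginj: "inj_on g P"
  proof (rule inj_onI)
    fix x y assume x: "x \<in> P" and y: "y \<in> P" and e: "g x = g y"
    obtain j l where xj: "x = (j,l)" by (cases x)
    obtain j' l' where yj: "y = (j',l')" by (cases y)
    define q where "q = (j-1) div r"
    define q' where "q' = (j'-1) div r"
    have e1: "j - q * r = j' - q' * r" and e2: "l - q*r = l' - q'*r"
      using e unfolding g_def xj yj q_def q'_def by auto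
    define s where "s = j - q*r"
    have "ii j = ii s + q * n" using sh[of s q] unfolding s_def by simp
    moreover have "ii j' = ii s + q' * n" using sh[of s q'] e1 unfolding s_def
      by (metis diff_add_cancel)
    moreover have "1 \<le> ii j" "ii j \<le> n" "1 \<le> ii j'" "ii j' \<le> n"
      using x y unfolding xj yj P_def by auto
    ultimately have "\<bar>(q - q') * n\<bar> < n" by (simp add: algebra_simps)
    hence "q = q'"
    proof -
      assume h: "\<bar>(q - q') * n\<bar> < n"
      show "q = q'"
      proof (rule ccontr)
        assume "q \<noteq> q'"
        hence "1 \<le> \<bar>q - q'\<bar>" by linarith
        hence "n \<le> \<bar>q - q'\<bar> * n" using assms(1) by (simp add: mult_le_cancel_right1)
        then show False using h assms(1) by (simp add: abs_mult)
      qed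
    qed
    then show "x = y" using e1 e2 xj yj by auto
  qed
  have gimg: "g ` P = Inv r ii"
  proof
    show "g ` P \<subseteq> Inv r ii"
    proof
      fix p assume "p \<in> g ` P"
      then obtain j l where jl: "(j,l) \<in> P" "p = g (j,l)" by auto
      define q where "q = (j-1) div r"
      have p: "p = (j - q*r, l - q*r)" using jl unfolding g_def q_def by simp
      have r0: "0 < r" using assms(2) by simp
      have "j - q*r = (j-1) mod r + 1" unfolding q_def using div_mult_mod_eq[of "j-1" r] by linarith
      moreover have "(j-1) mod r < r" "0 \<le> (j-1) mod r" using r0 by simp_all
      ultimately have s1: "1 \<le> j - q*r" "j - q*r \<le> r" by linarith+
      have "ii (j - q*r) = ii j - q*n" using sh[of "j - q*r" q] by simp
      moreover have "ii (l - q*r) = ii l - q*n" using sh[of "l - q*r" q] by simp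
      ultimately show "p \<in> Inv r ii" using jl(1) s1 p unfolding P_def Inv_def by auto
    qed
  next
    show "Inv r ii \<subseteq> g ` P"
    proof
      fix p assume "p \<in> Inv r ii"
      then obtain s t where p: "p = (s,t)" "1 \<le> s" "s \<le> r" "s < t" "ii t \<le> ii s"
        unfolding Inv_def by auto
      define m where "m = - ((ii s - 1) div n)"
      define j where "j = s + m * r"
      define l where "l = t + m * r"
      have ij: "ii j = ii s + m * n" using sh unfolding j_def by simp
      have il: "ii l = ii t + m * n" using sh unfolding l_def by simp
      have "ii s + m * n = (ii s - 1) mod n + 1" unfolding m_def
        using div_mult_mod_eq[of "ii s - 1" n] by (simp add: algebra_simps)
      moreover have "(ii s - 1) mod n < n" "0 \<le> (ii s - 1) mod n" using assms(1) by simp_all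
      ultimately have r1: "1 \<le> ii j" "ii j \<le> n" using ij by linarith+
      have inP: "(j,l) \<in> P" unfolding P_def using r1 ij il p j_def l_def by auto
      have "(j - 1) div r = m" unfolding j_def
      proof -
        have "(s - 1 + m * r) div r = (s-1) div r + m" using assms(2) by simp
        moreover have "(s-1) div r = 0" using p(2,3) by (simp add: div_pos_pos_trivial)
        ultimately show "(s + m * r - 1) div r = m" by (simp add: algebra_simps)
      qed
      hence "g (j,l) = p" unfolding g_def j_def l_def p by simp
      then show "p \<in> g ` P" using inP by force
    qed
  qed
  have finP: "finite P" using finInv ginj gimg by (metis finite_imageD)
  have cardP: "card P = card (Inv r ii)" using ginj gimg card_image by metis
  define h where "h = (\<lambda>(j::int,l::int). (ii j, j, ii l, l))"
  have hinj: "inj_on h P" by (rule inj_onI) (auto simp: h_def)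
  define F where "F = (\<lambda>(i, j, k, l). matA ii i j * matA ii k l)"
  have hsub: "h ` P \<subseteq> dA_index n" unfolding h_def P_def dA_index_def by auto
  have F1: "F x = 1" if "x \<in> h ` P" for x using that unfolding h_def F_def matA_def by auto
  have F0: "F x = 0" if "x \<in> dA_index n - h ` P" for x
  proof -
    obtain i j k l where x: "x = (i,j,k,l)" by (cases x)
    { assume "F x \<noteq> 0"
      then have "i = ii j" "k = ii l" unfolding F_def x matA_def by (auto split: if_splits)
      then have "x \<in> h ` P" using that unfolding x dA_index_def P_def h_def
        by (auto intro!: image_eqI[where x="(j,l)"]) }
    then show ?thesis using that by blast
  qed
  have fin: "finite (h ` P)" using finP by simp
  have summ: "F summable_on dA_index n"
  proof -
    have "F summable_on h ` P" using fin by (rule summable_on_finite)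
    then show ?thesis using summable_on_cong_neutral[of "h ` P" "dA_index n" F F] F0 hsub
      by (metis Diff_iff subset_iff)
  qed
  have "infsum F (dA_index n) = infsum F (h ` P)"
    using infsum_cong_neutral[of "h ` P" "dA_index n" F F] F0 hsub
    by (metis Diff_iff subset_iff)
  also have "\<dots> = sum F (h ` P)" using fin by simp
  also have "\<dots> = card (h ` P)" using F1 by simp
  also have "\<dots> = card P" using hinj card_image by metis
  finally have "dA n (matA ii) = card (Inv r ii)"
    unfolding dA_def F_def[symmetric] using cardP by simp
  then show ?thesis using summ finInv unfolding F_def by blast
qed

end
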